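(* A finite simple graph $G$ is pseudo-Gorenstein$^{*}$ if and only if $P_G(-1)=(-1)^{\alpha(G)}$.
   Context: Let $G$ be a finite simple graph on vertex set $[N]$, $K$ a field, $S=K[x_1,\dots,x_N]$, and $I(G)\subset S$ the edge ideal generated by $x_ix_j$ for $\{i,j\}\in E(G)$. Let $\alpha(G)$ be the independence number (which equals $\dim S/I(G)$). The Hilbert series of $S/I(G)$ is written uniquely as $(h_0+h_1t+\dots+h_st^s)/(1-t)^{\alpha(G)}$ with $h_s\neq 0$; the numerator $h_G(t)$ is the $h$-polynomial. The $\mathfrak a$-invariant is $\mathfrak a(G)=\deg h_G(t)-\alpha(G)$. $G$ is called pseudo-Gorenstein$^{*}$ if $h_s=1$ and $\mathfrak a(G)=0$. The independence polynomial is $P_G(x)=\sum_i g_ix^i$, where $g_i$ is the number of independent sets of $G$ of size $i$. *)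

theory Defs
  imports "HOL-Computational_Algebra.Polynomial_FPS"
begin

definition simple_graph :: "nat \<Rightarrow> nat set set \<Rightarrow> bool" where
  "simple_graph N E \<longleftrightarrow> (\<forall>e\<in>E. e \<subseteq> {1..N} \<and> card e = 2)"

definition independent :: "nat \<Rightarrow> nat set set \<Rightarrow> nat set \<Rightarrow> bool" where
  "independent N E S \<longleftrightarrow> S \<subseteq> {1..N} \<and> (\<forall>e\<in>E. \<not> e \<subseteq> S)"

definition indep_number :: "nat \<Rightarrow> nat set set \<Rightarrow> nat" where
  "indep_number N E = Max (card ` {S. independent N E S})"

definition indep_poly :: "nat \<Rightarrow> nat set set \<Rightarrow> int poly" where
  "indep_poly N E = (\<Sum>i\<le>N. monom (int (card {S. independent N E S \<and> card S = i})) i)"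

text \<open>Monomials of S = K[x_1..x_N] are exponent vectors a (zero outside {1..N}).
  The monomial x^a lies in the monomial ideal I(G) iff some generator x_i x_j
  (for an edge {i,j}) divides it, i.e. a_i >= 1 and a_j >= 1.
  Since the monomials outside a monomial ideal form a K-basis of the quotient,
  dim_K (S/I(G))_d is the number of degree-d monomials not in I(G).\<close>
definition monomials_deg :: "nat \<Rightarrow> nat \<Rightarrow> (nat \<Rightarrow> nat) set" where
  "monomials_deg N d = {a. (\<forall>i. i \<notin> {1..N} \<longrightarrow> a i = 0) \<and> (\<Sum>i\<in>{1..N}. a i) = d}"

definition in_edge_ideal :: "nat set set \<Rightarrow> (nat \<Rightarrow> nat) \<Rightarrow> bool" where
  "in_edge_ideal E a \<longleftrightarrow> (\<exists>e\<in>E. \<forall>i\<in>e. 1 \<le> a i)"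

definition hilbert_fun :: "nat \<Rightarrow> nat set set \<Rightarrow> nat \<Rightarrow> nat" where
  "hilbert_fun N E d = card {a \<in> monomials_deg N d. \<not> in_edge_ideal E a}"

definition hilbert_series :: "nat \<Rightarrow> nat set set \<Rightarrow> int fps" where
  "hilbert_series N E = Abs_fps (\<lambda>d. int (hilbert_fun N E d))"

definition h_poly :: "nat \<Rightarrow> nat set set \<Rightarrow> int poly" where
  "h_poly N E = (THE h. fps_of_poly h = hilbert_series N E * (1 - fps_X) ^ indep_number N E)"

definition a_invariant :: "nat \<Rightarrow> nat set set \<Rightarrow> int" where
  "a_invariant N E = int (degree (h_poly N E)) - int (indep_number N E)"

definition pseudo_gorenstein_star :: "nat \<Rightarrow> nat set set \<Rightarrow> bool" where
  "pseudo_gorenstein_star N E \<longleftrightarrow> lead_coeff (h_poly N E) = 1 \<and> a_invariant N E = 0"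

end

theory Submission imports Defs begin

definition FF :: "nat set \<Rightarrow> nat \<Rightarrow> (nat \<Rightarrow> nat) set" where
 "FF S d = {a. (\<forall>i. i \<notin> S \<longrightarrow> a i = 0) \<and> (\<forall>i\<in>S. 1 \<le> a i) \<and> sum a S = d}"

lemma FF_finite: assumes "finite S" shows "finite (FF S d)"
proof -
  have "FF S d \<subseteq> {f. \<forall>x. (x \<in> S \<longrightarrow> f x \<in> {0..d}) \<and> (x \<notin> S \<longrightarrow> f x = 0)}"
    using assms by (auto simp: FF_def intro: member_le_sum)
  then show ?thesis using finite_subset finite_set_of_finite_funs[OF assms, of "{0..d}" 0] by blast
qed

lemma FF_empty: "FF {} d = (if d = 0 then {\<lambda>_. 0} else {})"
  by (auto simp: FF_def)

lemma FF_insert_0: "finite S \<Longrightarrow> x \<notin> S \<Longrightarrow> FF (insert x S) 0 = {}"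
  by (auto simp: FF_def)

lemma FF_insert_Suc:
  assumes S: "finite S" and x: "x \<notin> S"
  shows "card (FF (insert x S) (Suc d)) = card (FF S d) + card (FF (insert x S) d)"
proof -
  let ?A = "FF (insert x S) (Suc d)"
  define P1 where "P1 = {a \<in> ?A. a x = 1}"
  define P2 where "P2 = {a \<in> ?A. a x \<noteq> 1}"
  have fin: "finite ?A" using S by (simp add: FF_finite)
  have split: "?A = P1 \<union> P2" "P1 \<inter> P2 = {}" by (auto simp: P1_def P2_def)
  have sumS: "\<And>a c. sum (a(x := c)) S = sum a S" "\<And>a c. (\<Sum>i\<in>S. if i = x then c else a i) = sum a S"
    using x by (auto intro!: sum.cong)
  have b1: "bij_betw (\<lambda>a. a(x := 0)) P1 (FF S d)"
  proof (rule bij_betw_byWitness[where f' = "\<lambda>a. a(x := 1)"])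
    show "\<forall>a\<in>P1. (a(x := 0))(x := 1) = a" by (auto simp: P1_def)
    show "\<forall>a\<in>FF S d. (a(x := 1))(x := 0) = a" using x by (auto simp: FF_def)
    show "(\<lambda>a. a(x := 0)) ` P1 \<subseteq> FF S d" using x S by (auto simp: P1_def FF_def sumS)
    show "(\<lambda>a. a(x := 1)) ` FF S d \<subseteq> P1" using x S by (auto simp: P1_def FF_def sumS)
  qed
  have b2: "bij_betw (\<lambda>a. a(x := a x - 1)) P2 (FF (insert x S) d)"
  proof (rule bij_betw_byWitness[where f' = "\<lambda>a. a(x := a x + 1)"])
    show "\<forall>a\<in>P2. (a(x := a x - 1))(x := (a(x := a x - 1)) x + 1) = a"
      by (auto simp: P2_def FF_def)
    show "\<forall>a\<in>FF (insert x S) d. (a(x := a x + 1))(x := (a(x := a x + 1)) x - 1) = a" by auto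
    show "(\<lambda>a. a(x := a x - 1)) ` P2 \<subseteq> FF (insert x S) d"
    proof
      fix b assume "b \<in> (\<lambda>a. a(x := a x - 1)) ` P2"
      then obtain a where a: "a \<in> P2" and b: "b = a(x := a x - 1)" by auto
      have "a x \<ge> 2" using a by (force simp: P2_def FF_def)
      then show "b \<in> FF (insert x S) d" using a x S
        by (auto simp: b P2_def FF_def sumS)
    qed
    show "(\<lambda>a. a(x := a x + 1)) ` FF (insert x S) d \<subseteq> P2"
    proof
      fix b assume "b \<in> (\<lambda>a. a(x := a x + 1)) ` FF (insert x S) d"
      then obtain a where a: "a \<in> FF (insert x S) d" and b: "b = a(x := a x + 1)" by auto
      have "a x \<ge> 1" using a by (force simp: FF_def)
      then show "b \<in> P2" using a x S
        by (auto simp: b P2_def FF_def sumS)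
    qed
  qed
  have "card ?A = card P1 + card P2"
    using split fin by (metis card_Un_disjoint finite_Un)
  also have "card P1 = card (FF S d)" using b1 bij_betw_same_card by blast
  also have "card P2 = card (FF (insert x S) d)" using b2 bij_betw_same_card by blast
  finally show ?thesis .
qed

lemma FF_fps:
  assumes "finite S"
  shows "Abs_fps (\<lambda>d. int (card (FF S d))) * (1 - fps_X) ^ card S = fps_X ^ card S"
  using assms
proof (induction S rule: finite_induct)
  case empty
  have "Abs_fps (\<lambda>d. int (card (FF {} d))) = 1"
    by (rule fps_ext) (simp add: FF_empty)
  then show ?case by simp
next
  case (insert x S)
  let ?A = "Abs_fps (\<lambda>d. int (card (FF (insert x S) d)))"
  let ?B = "Abs_fps (\<lambda>d. int (card (FF S d)))"
  have "?A * (1 - fps_X) = fps_X * ?B"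
  proof (rule fps_ext)
    fix n
    have "?A * (1 - fps_X) = ?A - fps_X * ?A" by (simp add: algebra_simps)
    then show "fps_nth (?A * (1 - fps_X)) n = fps_nth (fps_X * ?B) n"
      using insert by (cases n) (auto simp: FF_insert_0 FF_insert_Suc)
  qed
  then have "?A * (1 - fps_X) ^ card (insert x S) = fps_X * (?B * (1 - fps_X) ^ card S)"
  proof -
    assume h: "?A * (1 - fps_X) = fps_X * ?B"
    have "?A * (1 - fps_X) ^ card (insert x S) = (?A * (1 - fps_X)) * (1 - fps_X) ^ card S"
      using insert by (simp add: mult.assoc)
    also have "\<dots> = fps_X * (?B * (1 - fps_X) ^ card S)" by (simp add: h mult.assoc)
    finally show ?thesis .
  qed
  then show ?case using insert by simp
qed


lemma finite_IS: "finite {S. independent N E S}"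
  by (rule finite_subset[of _ "Pow {1..N}"]) (auto simp: independent_def)

lemma empty_IS: "simple_graph N E \<Longrightarrow> {} \<in> {S. independent N E S}"
  by (auto simp: independent_def simple_graph_def)

lemma le_alpha: "independent N E S \<Longrightarrow> card S \<le> indep_number N E"
  unfolding indep_number_def
  by (rule Max_ge) (auto intro: finite_imageI[OF finite_IS])

lemma IS_card_le: "independent N E S \<Longrightarrow> card S \<le> N"
  unfolding independent_def using card_mono[of "{1..N}" S] by auto

lemma hilb_decomp:
  "{a \<in> monomials_deg N d. \<not> in_edge_ideal E a} = (\<Union>S\<in>{S. independent N E S}. FF S d)"
proof safe
  fix a assume a: "a \<in> monomials_deg N d" "\<not> in_edge_ideal E a"
  let ?S = "{i. 1 \<le> a i}"
  have sub: "?S \<subseteq> {1..N}" using a(1) by (auto simp: monomials_deg_def)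
  have ind: "independent N E ?S" using a(2) sub by (auto simp: independent_def in_edge_ideal_def)
  have "sum a {1..N} = sum a ?S"
    by (rule sum.mono_neutral_right) (use sub in auto)
  then have "a \<in> FF ?S d" using a(1) by (auto simp: FF_def monomials_deg_def)
  with ind show "a \<in> (\<Union>S\<in>{S. independent N E S}. FF S d)" by blast
next
  fix a S assume S: "independent N E S" and a: "a \<in> FF S d"
  have sub: "S \<subseteq> {1..N}" using S by (auto simp: independent_def)
  have "sum a {1..N} = sum a S"
    by (rule sum.mono_neutral_right) (use sub a in \<open>auto simp: FF_def\<close>)
  then show "a \<in> monomials_deg N d" using a sub by (auto simp: FF_def monomials_deg_def)
  assume "in_edge_ideal E a"
  then obtain e where e: "e \<in> E" "\<forall>i\<in>e. 1 \<le> a i" by (auto simp: in_edge_ideal_def)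
  have "e \<subseteq> S"
  proof
    fix x assume "x \<in> e"
    then have "1 \<le> a x" using e(2) by blast
    then show "x \<in> S" using a unfolding FF_def by (metis (mono_tags, lifting) mem_Collect_eq not_one_le_zero)
  qed
  then show False using S e(1) by (auto simp: independent_def)
qed

lemma hilb_fun_sum: "hilbert_fun N E d = (\<Sum>T\<in>{S. independent N E S}. card (FF T d))"
  unfolding hilbert_fun_def hilb_decomp
proof (rule card_UN_disjoint[OF finite_IS])
  show "\<forall>A\<in>{S. independent N E S}. finite (FF A d)"
    by (auto intro!: FF_finite finite_subset[of _ "{1..N}"] simp: independent_def)
  show "\<forall>A\<in>{S. independent N E S}. \<forall>B\<in>{S. independent N E S}. A \<noteq> B \<longrightarrow> FF A d \<inter> FF B d = {}"
  proof (intro ballI impI)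
    fix S T :: "nat set" assume "S \<noteq> T"
    show "FF S d \<inter> FF T d = {}"
    proof (rule ccontr)
      assume "FF S d \<inter> FF T d \<noteq> {}"
      then obtain a where "a \<in> FF S d" "a \<in> FF T d" by blast
      then have "S = {i. 1 \<le> a i}" "T = {i. 1 \<le> a i}"
        by (auto simp: FF_def)
      with \<open>S \<noteq> T\<close> show False by simp
    qed
  qed
qed


lemma HS_sum: "hilbert_series N E = (\<Sum>T\<in>{S. independent N E S}. Abs_fps (\<lambda>d. int (card (FF T d))))"
  by (rule fps_ext) (simp add: hilbert_series_def fps_sum_nth hilb_fun_sum)

definition hp :: "nat \<Rightarrow> nat set set \<Rightarrow> int poly" where
  "hp N E = (\<Sum>T\<in>{S. independent N E S}. monom 1 (card T) * [:1,-1:] ^ (indep_number N E - card T))"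

lemma fps_p1: "fps_of_poly [:1::int,-1:] = 1 - fps_X"
  by (simp add: fps_of_poly_pCons fps_const_neg)

lemma fps_hp: "fps_of_poly (hp N E) = hilbert_series N E * (1 - fps_X) ^ indep_number N E"
proof -
  have "hilbert_series N E * (1 - fps_X) ^ indep_number N E =
     (\<Sum>T\<in>{S. independent N E S}. Abs_fps (\<lambda>d. int (card (FF T d))) * (1 - fps_X) ^ indep_number N E)"
    by (simp add: HS_sum sum_distrib_right)
  also have "\<dots> = (\<Sum>T\<in>{S. independent N E S}. fps_X ^ card T * (1 - fps_X) ^ (indep_number N E - card T))"
  proof (rule sum.cong[OF refl])
    fix T assume T: "T \<in> {S. independent N E S}"
    then have le: "card T \<le> indep_number N E" by (simp add: le_alpha)
    have fin: "finite T" using T by (auto simp: independent_def intro: finite_subset)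
    have e: "(1 - fps_X :: int fps) ^ indep_number N E = (1 - fps_X) ^ card T * (1 - fps_X) ^ (indep_number N E - card T)"
      using le by (metis le_add_diff_inverse power_add)
    show "Abs_fps (\<lambda>d. int (card (FF T d))) * (1 - fps_X) ^ indep_number N E =
        fps_X ^ card T * (1 - fps_X) ^ (indep_number N E - card T)"
      unfolding e mult.assoc[symmetric] FF_fps[OF fin] ..
  qed
  also have "\<dots> = fps_of_poly (hp N E)"
    by (simp add: hp_def fps_of_poly_sum fps_of_poly_mult fps_of_poly_power fps_of_poly_monom' fps_p1)
  finally show ?thesis ..
qed

lemma h_poly_hp: "h_poly N E = hp N E"
  unfolding h_poly_def
  by (rule the_equality) (auto simp: fps_hp simp flip: fps_of_poly_eq_iff)

lemma degree_hp: "degree (hp N E) \<le> indep_number N E"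
  unfolding hp_def
proof (rule degree_sum_le[OF finite_IS])
  fix T assume T: "T \<in> {S. independent N E S}"
  then have le: "card T \<le> indep_number N E" by (simp add: le_alpha)
  have "degree (monom (1::int) (card T) * [:1,-1:] ^ (indep_number N E - card T))
      \<le> degree (monom (1::int) (card T)) + degree ([:1::int,-1:] ^ (indep_number N E - card T))"
    by (rule degree_mult_le)
  also have "\<dots> \<le> card T + (indep_number N E - card T)"
    using degree_power_le[of "[:1::int,-1:]" "indep_number N E - card T"]
    by (intro add_mono degree_monom_le) simp
  finally show "degree (monom (1::int) (card T) * [:1,-1:] ^ (indep_number N E - card T)) \<le> indep_number N E"
    using le by simp
qed

lemma coeff_p1_pow: "coeff ([:1::int,-1:] ^ m) m = (-1) ^ m"
proof -
  have "degree ([:1::int,-1:] ^ m) = m" by (subst degree_power_eq) auto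
  then show ?thesis using lead_coeff_power[of "[:1::int,-1:]" m] by simp
qed

lemma coeff_hp: "coeff (hp N E) (indep_number N E) = (\<Sum>T\<in>{S. independent N E S}. (-1) ^ (indep_number N E - card T))"
  unfolding hp_def coeff_sum
  by (rule sum.cong[OF refl]) (auto simp: coeff_monom_mult coeff_p1_pow le_alpha not_less[symmetric] dest: le_alpha)

lemma poly_indep: "poly (indep_poly N E) (-1) = (\<Sum>T\<in>{S. independent N E S}. (-1) ^ card T)"
proof -
  have "poly (indep_poly N E) (-1) = (\<Sum>i\<le>N. int (card {S. independent N E S \<and> card S = i}) * (-1) ^ i)"
    by (simp add: indep_poly_def poly_sum poly_monom)
  also have "\<dots> = (\<Sum>i\<le>N. \<Sum>T\<in>{T \<in> {S. independent N E S}. card T = i}. (-1) ^ card T)"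
    by (rule sum.cong[OF refl]) simp
  also have "\<dots> = (\<Sum>T\<in>{S. independent N E S}. (-1) ^ card T)"
    by (rule sum.group[OF finite_IS finite_atMost]) (auto dest: IS_card_le)
  finally show ?thesis .
qed


lemma sign_rel: "(-1::int) ^ indep_number N E * coeff (hp N E) (indep_number N E) = poly (indep_poly N E) (-1)"
  unfolding coeff_hp poly_indep sum_distrib_left
proof (rule sum.cong[OF refl])
  fix T assume "T \<in> {S. independent N E S}"
  then have le: "card T \<le> indep_number N E" by (simp add: le_alpha)
  have "(-1::int) ^ indep_number N E = (-1) ^ (indep_number N E - card T) * (-1) ^ card T"
    using le by (metis le_add_diff_inverse2 power_add)
  then show "(-1::int) ^ indep_number N E * (-1) ^ (indep_number N E - card T) = (-1) ^ card T"
  proof -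
    assume e: "(-1::int) ^ indep_number N E = (-1) ^ (indep_number N E - card T) * (-1) ^ card T"
    have x: "(-1::int) ^ (indep_number N E - card T) * (-1) ^ (indep_number N E - card T) = 1"
      by (simp flip: power_mult_distrib)
    have "(-1::int) ^ indep_number N E * (-1) ^ (indep_number N E - card T)
        = ((-1) ^ (indep_number N E - card T) * (-1) ^ (indep_number N E - card T)) * (-1) ^ card T"
      by (simp only: e mult_ac)
    then show ?thesis by (simp only: x mult_1_left)
  qed
qed

theorem corollary1p4:
  fixes N :: nat and E :: "nat set set"
  assumes "simple_graph N E"
  shows "pseudo_gorenstein_star N E \<longleftrightarrow>
         poly (indep_poly N E) (-1) = (-1) ^ indep_number N E"
proof -
  let ?a = "indep_number N E"
  let ?c = "coeff (hp N E) ?a"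
  have pg: "pseudo_gorenstein_star N E \<longleftrightarrow> ?c = 1"
  proof
    assume "pseudo_gorenstein_star N E"
    then have "lead_coeff (hp N E) = 1" "degree (hp N E) = ?a"
      by (auto simp: pseudo_gorenstein_star_def a_invariant_def h_poly_hp)
    then show "?c = 1" by simp
  next
    assume c: "?c = 1"
    then have "?a \<le> degree (hp N E)" by (intro le_degree) simp
    then have "degree (hp N E) = ?a" using degree_hp[of N E] by simp
    then show "pseudo_gorenstein_star N E"
      using c by (simp add: pseudo_gorenstein_star_def a_invariant_def h_poly_hp)
  qed
  have "?c = 1 \<longleftrightarrow> (-1::int) ^ ?a * ?c = (-1) ^ ?a" by simp
  then show ?thesis using pg sign_rel[of N E] by simp
qed

end
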